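(* Let $R$ be a semiring and $\theta$ a congruence on $R$. The following are equivalent: (1) $\theta$ is a $k$-congruence; (2) $R/\theta$ has a zero $0_\theta$ and $\theta\subseteq \kappa_{0_\theta}$; (3) $R/\theta$ has a zero $0_\theta$ and $\theta=\kappa_{0_\theta}$. (Here the zero $0_\theta$ of $R/\theta$ is a $\theta$-class, i.e. a subset of $R$, and it is an ideal of $R$.)
   Context: A semiring $(R,+,\cdot)$ is a set with two binary operations such that $(R,+)$ is a commutative semigroup, $(R,\cdot)$ is a semigroup, and multiplication distributes over addition from both sides; no additive neutral element or identity is assumed. An element $0$ of a semiring $S$ is a zero of $S$ if $0+s=s$ and $0s=s0=0$ for all $s\in S$. An ideal of $R$ is a nonempty subset $A\subseteq R$ with $a+b\in A$ and $ra,ar\in A$ for all $a,b\in A$, $r\in R$. A congruence on $R$ is an equivalence relation $\equiv$ such that $a\equiv b$ implies $a+c\equiv b+c$, $ac\equiv bc$, $ca\equiv cb$ for all $a,b,c\in R$; $R/\theta$ denotes the quotient semiring of $\theta$-classes with $[x]+[y]=[x+y]$, $[x][y]=[xy]$. For an ideal $A$ of $R$, $\kappa_A$ is the congruence on $R$ defined by $x\,\kappa_A\,y$ iff $x+a=y+b$ for some $a,b\in A$. A congruence $\theta$ on $R$ is a $k$-congruence if $\theta=\kappa_A$ for some ideal $A$ of $R$. Throughout, $|R|\geq 2$. *)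

theory Defs
  imports Main
begin

text \<open>Semirings without zero/identity: Isabelle's type class semiring
(commutative additive semigroup, multiplicative semigroup, two-sided distributivity).\<close>

definition is_ideal :: "'a::semiring set \<Rightarrow> bool" where
  "is_ideal A \<longleftrightarrow> A \<noteq> {} \<and> (\<forall>a\<in>A. \<forall>b\<in>A. a + b \<in> A)
     \<and> (\<forall>a\<in>A. \<forall>r. r * a \<in> A \<and> a * r \<in> A)"

definition is_congruence :: "('a::semiring) rel \<Rightarrow> bool" where
  "is_congruence \<theta> \<longleftrightarrow> equiv UNIV \<theta> \<and>
     (\<forall>a b c. (a, b) \<in> \<theta> \<longrightarrow> (a + c, b + c) \<in> \<theta> \<and> (a * c, b * c) \<in> \<theta> \<and> (c * a, c * b) \<in> \<theta>)"

definition kappa :: "'a::semiring set \<Rightarrow> 'a rel" where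
  "kappa A = {(x, y). \<exists>a\<in>A. \<exists>b\<in>A. x + a = y + b}"

definition is_k_congruence :: "('a::semiring) rel \<Rightarrow> bool" where
  "is_k_congruence \<theta> \<longleftrightarrow> (\<exists>A. is_ideal A \<and> \<theta> = kappa A)"

definition quot_add :: "('a::semiring) rel \<Rightarrow> 'a set \<Rightarrow> 'a set \<Rightarrow> 'a set" where
  "quot_add \<theta> X Y = \<theta> `` {x + y | x y. x \<in> X \<and> y \<in> Y}"

definition quot_mult :: "('a::semiring) rel \<Rightarrow> 'a set \<Rightarrow> 'a set \<Rightarrow> 'a set" where
  "quot_mult \<theta> X Y = \<theta> `` {x * y | x y. x \<in> X \<and> y \<in> Y}"

definition is_quot_zero :: "('a::semiring) rel \<Rightarrow> 'a set \<Rightarrow> bool" where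
  "is_quot_zero \<theta> Z \<longleftrightarrow> Z \<in> UNIV // \<theta> \<and>
     (\<forall>S \<in> UNIV // \<theta>. quot_add \<theta> Z S = S \<and> quot_mult \<theta> Z S = Z \<and> quot_mult \<theta> S Z = Z)"

end

theory Submission
  imports Defs
begin

lemma cg_refl: "is_congruence \<theta> \<Longrightarrow> (x,x) \<in> \<theta>"
  unfolding is_congruence_def equiv_def refl_on_def by blast
lemma cg_sym: "is_congruence \<theta> \<Longrightarrow> (x,y) \<in> \<theta> \<Longrightarrow> (y,x) \<in> \<theta>"
  unfolding is_congruence_def equiv_def sym_def by blast
lemma cg_trans: "is_congruence \<theta> \<Longrightarrow> (x,y) \<in> \<theta> \<Longrightarrow> (y,z) \<in> \<theta> \<Longrightarrow> (x,z) \<in> \<theta>"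
  unfolding is_congruence_def equiv_def trans_def by blast
lemma cg_add: "is_congruence \<theta> \<Longrightarrow> (x,y) \<in> \<theta> \<Longrightarrow> (x+c,y+c) \<in> \<theta>"
  unfolding is_congruence_def by blast
lemma cg_mr: "is_congruence \<theta> \<Longrightarrow> (x,y) \<in> \<theta> \<Longrightarrow> (x*c,y*c) \<in> \<theta>"
  unfolding is_congruence_def by blast
lemma cg_ml: "is_congruence \<theta> \<Longrightarrow> (x,y) \<in> \<theta> \<Longrightarrow> (c*x,c*y) \<in> \<theta>"
  unfolding is_congruence_def by blast

lemma L1:
  assumes cg: "is_congruence \<theta>" and z: "is_quot_zero \<theta> Z"
  shows "kappa Z \<subseteq> \<theta>"
proof
  fix p assume "p \<in> kappa Z"
  then obtain x y a b where p: "p = (x,y)" and ab: "a \<in> Z" "b \<in> Z" and e: "x + a = y + b"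
    unfolding kappa_def by blast
  have q: "(u, c + u) \<in> \<theta>" if "c \<in> Z" for u c
  proof -
    have "\<theta> `` {u} \<in> UNIV // \<theta>" by (rule quotientI) simp
    with z have eq: "quot_add \<theta> Z (\<theta> `` {u}) = \<theta> `` {u}" unfolding is_quot_zero_def by blast
    have "c + u \<in> quot_add \<theta> Z (\<theta> `` {u})"
      unfolding quot_add_def using that cg_refl[OF cg] by blast
    with eq show ?thesis by simp
  qed
  have "(x, x + a) \<in> \<theta>" using q[OF ab(1), of x] by (simp add: add.commute)
  moreover have "(y, y + b) \<in> \<theta>" using q[OF ab(2), of y] by (simp add: add.commute)
  ultimately show "p \<in> \<theta>" using p e cg_trans[OF cg] cg_sym[OF cg] by metis
qed

lemma L2:
  assumes cg: "is_congruence \<theta>" and z: "is_quot_zero \<theta> Z"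
  shows "is_ideal Z"
proof -
  have ZQ: "Z \<in> UNIV // \<theta>" using z unfolding is_quot_zero_def by blast
  then obtain w where w: "Z = \<theta> `` {w}" by (auto elim: quotientE)
  have "Z \<noteq> {}" using w cg_refl[OF cg] by blast
  moreover have "a + b \<in> Z" if "a \<in> Z" "b \<in> Z" for a b
  proof -
    have eq: "quot_add \<theta> Z Z = Z" using z ZQ unfolding is_quot_zero_def by blast
    have "a + b \<in> quot_add \<theta> Z Z"
      unfolding quot_add_def using that cg_refl[OF cg] by blast
    with eq show ?thesis by simp
  qed
  moreover have "r * a \<in> Z \<and> a * r \<in> Z" if "a \<in> Z" for a r
  proof -
    have RQ: "\<theta> `` {r} \<in> UNIV // \<theta>" by (rule quotientI) simp
    have r: "r \<in> \<theta> `` {r}" using cg_refl[OF cg] by blast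
    have e1: "quot_mult \<theta> (\<theta> `` {r}) Z = Z" and e2: "quot_mult \<theta> Z (\<theta> `` {r}) = Z"
      using z RQ unfolding is_quot_zero_def by blast+
    have "r * a \<in> quot_mult \<theta> (\<theta> `` {r}) Z" "a * r \<in> quot_mult \<theta> Z (\<theta> `` {r})"
      unfolding quot_mult_def using that r cg_refl[OF cg] by blast+
    with e1 e2 show ?thesis by simp
  qed
  ultimately show ?thesis unfolding is_ideal_def by blast
qed

lemma L3:
  assumes cg: "is_congruence \<theta>" and A: "is_ideal A" and th: "\<theta> = kappa A"
  shows "\<exists>Z. is_quot_zero \<theta> Z \<and> A \<subseteq> Z"
proof -
  obtain a where a: "a \<in> A" using A unfolding is_ideal_def by blast
  define Z where "Z = \<theta> `` {a}"
  have inA: "(a, c) \<in> \<theta>" if "c \<in> A" for c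
    proof -
    have "a + c = c + a" by (simp add: add.commute)
    then show ?thesis unfolding th kappa_def using a that by blast
  qed
  have AZ: "A \<subseteq> Z" unfolding Z_def using inA by blast
  have sa: "(s, a + s) \<in> \<theta>" for s
  proof -
    have "a + a \<in> A" using A a unfolding is_ideal_def by blast
    moreover have "s + (a + a) = (a + s) + a" by (simp add: add_ac)
    ultimately show ?thesis unfolding th kappa_def using a by blast
  qed
  have ZQ: "Z \<in> UNIV // \<theta>" unfolding Z_def by (rule quotientI) simp
  have "quot_add \<theta> Z S = S \<and> quot_mult \<theta> Z S = Z \<and> quot_mult \<theta> S Z = Z"
    if "S \<in> UNIV // \<theta>" for S
  proof -
    from that obtain s where S: "S = \<theta> `` {s}" by (auto elim: quotientE)
    have 1: "quot_add \<theta> Z S = S"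
    proof
      show "quot_add \<theta> Z S \<subseteq> S"
      proof
        fix w assume "w \<in> quot_add \<theta> Z S"
        then obtain z t where zt: "(a,z) \<in> \<theta>" "(s,t) \<in> \<theta>" "(z + t, w) \<in> \<theta>"
          unfolding quot_add_def Z_def S by blast
        have "(a + s, z + s) \<in> \<theta>" using cg_add[OF cg zt(1)] .
        moreover have "(s + z, t + z) \<in> \<theta>" using cg_add[OF cg zt(2)] .
        ultimately have "(a + s, z + t) \<in> \<theta>" using cg_trans[OF cg]
          by (metis add.commute)
        then have "(s, w) \<in> \<theta>" using sa zt(3) cg_trans[OF cg] by metis
        then show "w \<in> S" unfolding S by blast
      qed
    next
      show "S \<subseteq> quot_add \<theta> Z S"
      proof
        fix w assume "w \<in> S"
        then have "(s,w) \<in> \<theta>" unfolding S by blast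
        then have "(a + s, w) \<in> \<theta>" using sa cg_sym[OF cg] cg_trans[OF cg] by metis
        moreover have "a \<in> Z" "s \<in> S" unfolding Z_def S using cg_refl[OF cg] by blast+
        ultimately show "w \<in> quot_add \<theta> Z S" unfolding quot_add_def by blast
      qed
    qed
    have 2: "quot_mult \<theta> Z S = Z"
    proof
      show "quot_mult \<theta> Z S \<subseteq> Z"
      proof
        fix w assume "w \<in> quot_mult \<theta> Z S"
        then obtain z t where zt: "(a,z) \<in> \<theta>" "(s,t) \<in> \<theta>" "(z * t, w) \<in> \<theta>"
          unfolding quot_mult_def Z_def S by blast
        have "(a * t, z * t) \<in> \<theta>" using cg_mr[OF cg zt(1)] .
        moreover have "a * t \<in> A" using A a unfolding is_ideal_def by blast
        ultimately have "(a, z * t) \<in> \<theta>" using inA cg_trans[OF cg] by metis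
        then have "(a, w) \<in> \<theta>" using zt(3) cg_trans[OF cg] by metis
        then show "w \<in> Z" unfolding Z_def by blast
      qed
    next
      show "Z \<subseteq> quot_mult \<theta> Z S"
      proof
        fix w assume "w \<in> Z"
        then have "(a,w) \<in> \<theta>" unfolding Z_def by blast
        moreover have "a * s \<in> A" using A a unfolding is_ideal_def by blast
        ultimately have "(a * s, w) \<in> \<theta>" using inA cg_sym[OF cg] cg_trans[OF cg] by metis
        moreover have "a \<in> Z" "s \<in> S" unfolding Z_def S using cg_refl[OF cg] by blast+
        ultimately show "w \<in> quot_mult \<theta> Z S" unfolding quot_mult_def by blast
      qed
    qed
    have 3: "quot_mult \<theta> S Z = Z"
    proof
      show "quot_mult \<theta> S Z \<subseteq> Z"
      proof
        fix w assume "w \<in> quot_mult \<theta> S Z"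
        then obtain z t where zt: "(a,z) \<in> \<theta>" "(s,t) \<in> \<theta>" "(t * z, w) \<in> \<theta>"
          unfolding quot_mult_def Z_def S by blast
        have "(t * a, t * z) \<in> \<theta>" using cg_ml[OF cg zt(1)] .
        moreover have "t * a \<in> A" using A a unfolding is_ideal_def by blast
        ultimately have "(a, t * z) \<in> \<theta>" using inA cg_trans[OF cg] by metis
        then have "(a, w) \<in> \<theta>" using zt(3) cg_trans[OF cg] by metis
        then show "w \<in> Z" unfolding Z_def by blast
      qed
    next
      show "Z \<subseteq> quot_mult \<theta> S Z"
      proof
        fix w assume "w \<in> Z"
        then have "(a,w) \<in> \<theta>" unfolding Z_def by blast
        moreover have "s * a \<in> A" using A a unfolding is_ideal_def by blast
        ultimately have "(s * a, w) \<in> \<theta>" using inA cg_sym[OF cg] cg_trans[OF cg] by metis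
        moreover have "a \<in> Z" "s \<in> S" unfolding Z_def S using cg_refl[OF cg] by blast+
        ultimately show "w \<in> quot_mult \<theta> S Z" unfolding quot_mult_def by blast
      qed
    qed
    from 1 2 3 show ?thesis by blast
  qed
  with ZQ AZ show ?thesis unfolding is_quot_zero_def by blast
qed

lemma kappa_mono: "A \<subseteq> B \<Longrightarrow> kappa A \<subseteq> kappa B"
  unfolding kappa_def by blast

theorem theorem3p3:
  fixes \<theta> :: "('a::semiring) rel"
  assumes card2: "\<exists>x y :: 'a. x \<noteq> y"
    and cong: "is_congruence \<theta>"
  shows "(is_k_congruence \<theta> \<longleftrightarrow> (\<exists>Z. is_quot_zero \<theta> Z \<and> \<theta> \<subseteq> kappa Z))
       \<and> (is_k_congruence \<theta> \<longleftrightarrow> (\<exists>Z. is_quot_zero \<theta> Z \<and> \<theta> = kappa Z))"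
proof -
  have a: "(\<exists>Z. is_quot_zero \<theta> Z \<and> \<theta> \<subseteq> kappa Z) \<longleftrightarrow> (\<exists>Z. is_quot_zero \<theta> Z \<and> \<theta> = kappa Z)"
    using L1[OF cong] by blast
  have b: "is_k_congruence \<theta> \<Longrightarrow> \<exists>Z. is_quot_zero \<theta> Z \<and> \<theta> \<subseteq> kappa Z"
  proof -
    assume "is_k_congruence \<theta>"
    then obtain A where A: "is_ideal A" "\<theta> = kappa A" unfolding is_k_congruence_def by blast
    from L3[OF cong A] obtain Z where "is_quot_zero \<theta> Z" "A \<subseteq> Z" by blast
    with A kappa_mono show ?thesis by blast
  qed
  have c: "(\<exists>Z. is_quot_zero \<theta> Z \<and> \<theta> = kappa Z) \<Longrightarrow> is_k_congruence \<theta>"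
    using L2[OF cong] unfolding is_k_congruence_def by blast
  show ?thesis using a b c by blast
qed

end
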